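(* Let $(\Delta,\mathfrak o,m,q)$ be a quantized Brauer graph such that $\Delta$ contains no loops. Then there exist a finite abelian group $G$ and a Brauer weighting $W:\mathcal Z_\Delta\to G$ of $(\Delta,\mathfrak o,m,q)$ such that the graph $\Delta_W$ of the quantized Brauer covering graph $(\Delta_W,\mathfrak o_W,m_W,q_W)$ has no multiple edges, i.e. no two distinct edges of $\Delta_W$ have the same pair of endpoints.
   Context: Brauer graphs. A Brauer graph $(\Delta,\mathfrak o,m)$ is a finite connected graph $\Delta$ (loops and multiple edges allowed) with vertex set $\Delta_0$, edge set $\Delta_1$ and at least one edge, together with a multiplicity function $m:\Delta_0\to\mathbb Z_{\ge 1}$ and, for each vertex $\mu$, a cyclic ordering $\mathfrak o$ of the edges incident with $\mu$. A loop at $\mu$ occurs twice in the cyclic ordering at $\mu$; its two occurrences are regarded as two distinct elements of $\Delta_1$ (each with its own successor). Edge $j$ is the successor of edge $i$ at $\mu$ if $j$ immediately follows $i$ in the cyclic ordering at $\mu$. The valency $\operatorname{val}(\mu)$ is the number of edges incident with $\mu$, loops counted twice; if $\operatorname{val}(\mu)=1$ the unique edge at $\mu$ is its own successor. An edge $i$ is truncated at its endpoint $\mu$ if $\operatorname{val}(\mu)=1$ and $m(\mu)=1$. Fix a field $K$. A quantized Brauer graph $(\Delta,\mathfrak o,m,q)$ is a Brauer graph with a function $q:\mathcal X_\Delta\to K\setminus\{0\}$, $(i,\mu)\mapsto q_{i,\mu}$, where $\mathcal X_\Delta$ is the set of pairs $(i,\mu)$ with $\mu$ an endpoint of $i$ and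 $i$ not truncated at either of its endpoints. Successor weightings. Let $G$ be a finite abelian group. For $\mu\in\Delta_0$ let $\mathcal Z_\mu$ be the set of pairs $(i,j)$ of edges with $j$ the successor of $i$ at $\mu$, and $\mathcal Z_\Delta=\bigsqcup_{\mu\in\Delta_0}\mathcal Z_\mu$ (disjoint union). A successor weighting is a function $W:\mathcal Z_\Delta\to G$. Put $\omega_\mu=\prod_{(i,j)\in\mathcal Z_\mu}W(i,j)$, let $\operatorname{ord}(\mu)$ be the order of $\omega_\mu$ in $G$, and $H_\mu=\langle\omega_\mu\rangle$. $W$ is a Brauer weighting if $\operatorname{ord}(\mu)$ divides $m(\mu)$ for all $\mu\in\Delta_0$. For each $\mu$, $\sim$ is the equivalence relation on the set of pairs $(i,H_\mu g)$ ($i$ incident with $\mu$, $g\in G$) generated by $(i,H_\mu g)\sim(j,H_\mu gW(i,j))$ whenever $j$ is the successor of $i$ at $\mu$; the class of $(i,H_\mu g)$ is $[i,H_\mu g]$, and $\mathcal D_\mu$ is the set of classes. Brauer covering graph. The graph $\Delta_W$ has vertices $\mu_d$ ($\mu\in\Delta_0$, $d\in\mathcal D_\mu$) and edges $i_g$ ($i\in\Delta_1$, $g\in G$). If $i$ has endpoints $\mu$ and $\nu$, then $i_g$ has endpoints $\mu_{[i,H_\mu g]}$ and $\nu_{[i,H_\nu g]}$; if $i$ is a loop at $\mu$ with its two occurrences $i,\hat i$, then $i_g$ has endpoints $\mu_{[i,H_\mu g]}$ and $\mu_{[\hat i,H_\mu g]}$. The cyclic ordering $\mathfrak o_W$ is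 defined by: if $j$ is the successor of $i$ at $\mu$, then $j_{gW(i,j)}$ is the successor of $i_g$ at $\mu_{[i,H_\mu g]}$. For a Brauer weighting, $m_W(\mu_d)=m(\mu)/\operatorname{ord}(\mu)$; $(\Delta_W,\mathfrak o_W,m_W)$ is the Brauer covering graph. Given a quantizing function $q$ on $\Delta$, $q_W(i_g,\mu_d)=q_{i,\mu}$, and $(\Delta_W,\mathfrak o_W,m_W,q_W)$ is the quantized Brauer covering graph. *)

theory Defs
  imports "HOL-Algebra.Algebra" "HOL-Library.Multiset"
begin

text \<open>Brauer graphs are encoded by half-edges (edge occurrences at a vertex):
  V vertices, E edges, Hf half-edges, vert h the vertex at which the occurrence h sits,
  edge h the edge it belongs to, nxt h the occurrence following h in the cyclic
  ordering at vert h.  Each edge has exactly two occurrences (a loop has two occurrences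
  at the same vertex).\<close>

definition adj_rel :: "'h set \<Rightarrow> ('h \<Rightarrow> 'v) \<Rightarrow> ('h \<Rightarrow> 'e) \<Rightarrow> ('v \<times> 'v) set" where
  "adj_rel Hf vert edge = {(vert h, vert h') | h h'. h \<in> Hf \<and> h' \<in> Hf \<and> edge h = edge h'}"

definition brauer_graph ::
  "'v set \<Rightarrow> 'e set \<Rightarrow> 'h set \<Rightarrow> ('h \<Rightarrow> 'v) \<Rightarrow> ('h \<Rightarrow> 'e) \<Rightarrow> ('h \<Rightarrow> 'h) \<Rightarrow> ('v \<Rightarrow> nat) \<Rightarrow> bool" where
  "brauer_graph V E Hf vert edge nxt m \<longleftrightarrow>
     finite V \<and> finite E \<and> finite Hf \<and> E \<noteq> {} \<and>
     vert ` Hf \<subseteq> V \<and> edge ` Hf = E \<and>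
     (\<forall>e\<in>E. card {h\<in>Hf. edge h = e} = 2) \<and>
     bij_betw nxt Hf Hf \<and>
     (\<forall>h\<in>Hf. vert (nxt h) = vert h) \<and>
     (\<forall>h\<in>Hf. \<forall>h'\<in>Hf. vert h = vert h' \<longrightarrow> (\<exists>n. (nxt ^^ n) h = h')) \<and>
     (\<forall>u\<in>V. \<forall>w\<in>V. (u, w) \<in> (adj_rel Hf vert edge)\<^sup>*) \<and>
     (\<forall>v\<in>V. m v \<ge> 1)"

definition no_loops :: "'h set \<Rightarrow> ('h \<Rightarrow> 'v) \<Rightarrow> ('h \<Rightarrow> 'e) \<Rightarrow> bool" where
  "no_loops Hf vert edge \<longleftrightarrow>
     (\<forall>h\<in>Hf. \<forall>h'\<in>Hf. edge h = edge h' \<and> h \<noteq> h' \<longrightarrow> vert h \<noteq> vert h')"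

definition valency :: "'h set \<Rightarrow> ('h \<Rightarrow> 'v) \<Rightarrow> 'v \<Rightarrow> nat" where
  "valency Hf vert \<mu> = card {h\<in>Hf. vert h = \<mu>}"

definition truncated_at :: "'h set \<Rightarrow> ('h \<Rightarrow> 'v) \<Rightarrow> ('v \<Rightarrow> nat) \<Rightarrow> 'v \<Rightarrow> bool" where
  "truncated_at Hf vert m \<mu> \<longleftrightarrow> valency Hf vert \<mu> = 1 \<and> m \<mu> = 1"

definition quant_domain :: "'h set \<Rightarrow> ('h \<Rightarrow> 'v) \<Rightarrow> ('h \<Rightarrow> 'e) \<Rightarrow> ('v \<Rightarrow> nat) \<Rightarrow> ('e \<times> 'v) set" where
  "quant_domain Hf vert edge m =
     {(edge h, vert h) | h. h \<in> Hf \<and>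
        (\<forall>h'\<in>Hf. edge h' = edge h \<longrightarrow> \<not> truncated_at Hf vert m (vert h'))}"

definition quantized_brauer_graph ::
  "'v set \<Rightarrow> 'e set \<Rightarrow> 'h set \<Rightarrow> ('h \<Rightarrow> 'v) \<Rightarrow> ('h \<Rightarrow> 'e) \<Rightarrow> ('h \<Rightarrow> 'h) \<Rightarrow> ('v \<Rightarrow> nat)
     \<Rightarrow> ('e \<Rightarrow> 'v \<Rightarrow> 'k::field) \<Rightarrow> bool" where
  "quantized_brauer_graph V E Hf vert edge nxt m q \<longleftrightarrow>
     brauer_graph V E Hf vert edge nxt m \<and>
     (\<forall>(i, \<mu>) \<in> quant_domain Hf vert edge m. q i \<mu> \<noteq> 0)"

text \<open>Successor weightings: a pair (i,j) in Z_mu with j the successor of i at mu is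
  represented by the occurrence h of i at mu (so that j = edge (nxt h)); hence
  a successor weighting is a function W on half-edges.\<close>

definition omega :: "('g, 'x) monoid_scheme \<Rightarrow> 'h set \<Rightarrow> ('h \<Rightarrow> 'v) \<Rightarrow> ('h \<Rightarrow> 'g) \<Rightarrow> 'v \<Rightarrow> 'g" where
  "omega G Hf vert W \<mu> = finprod G W {h\<in>Hf. vert h = \<mu>}"

definition Hsub :: "('g, 'x) monoid_scheme \<Rightarrow> 'h set \<Rightarrow> ('h \<Rightarrow> 'v) \<Rightarrow> ('h \<Rightarrow> 'g) \<Rightarrow> 'v \<Rightarrow> 'g set" where
  "Hsub G Hf vert W \<mu> = generate G {omega G Hf vert W \<mu>}"

definition successor_weighting :: "('g, 'x) monoid_scheme \<Rightarrow> 'h set \<Rightarrow> ('h \<Rightarrow> 'g) \<Rightarrow> bool" where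
  "successor_weighting G Hf W \<longleftrightarrow> (\<forall>h\<in>Hf. W h \<in> carrier G)"

definition brauer_weighting ::
  "('g, 'x) monoid_scheme \<Rightarrow> 'v set \<Rightarrow> 'h set \<Rightarrow> ('h \<Rightarrow> 'v) \<Rightarrow> ('v \<Rightarrow> nat) \<Rightarrow> ('h \<Rightarrow> 'g) \<Rightarrow> bool" where
  "brauer_weighting G V Hf vert m W \<longleftrightarrow>
     successor_weighting G Hf W \<and>
     (\<forall>\<mu>\<in>V. group.ord G (omega G Hf vert W \<mu>) dvd m \<mu>)"

definition cov_step ::
  "('g, 'x) monoid_scheme \<Rightarrow> 'h set \<Rightarrow> ('h \<Rightarrow> 'v) \<Rightarrow> ('h \<Rightarrow> 'h) \<Rightarrow> ('h \<Rightarrow> 'g) \<Rightarrow> 'v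
     \<Rightarrow> (('h \<times> 'g set) \<times> ('h \<times> 'g set)) set" where
  "cov_step G Hf vert nxt W \<mu> =
     {((h, r_coset G (Hsub G Hf vert W \<mu>) g),
       (nxt h, r_coset G (Hsub G Hf vert W \<mu>) (g \<otimes>\<^bsub>G\<^esub> W h))) | h g.
        h \<in> Hf \<and> vert h = \<mu> \<and> g \<in> carrier G}"

definition cov_class ::
  "('g, 'x) monoid_scheme \<Rightarrow> 'h set \<Rightarrow> ('h \<Rightarrow> 'v) \<Rightarrow> ('h \<Rightarrow> 'h) \<Rightarrow> ('h \<Rightarrow> 'g) \<Rightarrow> 'h \<Rightarrow> 'g
     \<Rightarrow> ('h \<times> 'g set) set" where
  "cov_class G Hf vert nxt W h g =
     (let R = cov_step G Hf vert nxt W (vert h) in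
      (R \<union> R\<inverse>)\<^sup>* `` {(h, r_coset G (Hsub G Hf vert W (vert h)) g)})"

text \<open>Endpoints (as a multiset of vertices mu_d of Delta_W) of the edge i_g of Delta_W.\<close>
definition cov_endpoints ::
  "('g, 'x) monoid_scheme \<Rightarrow> 'h set \<Rightarrow> ('h \<Rightarrow> 'v) \<Rightarrow> ('h \<Rightarrow> 'e) \<Rightarrow> ('h \<Rightarrow> 'h) \<Rightarrow> ('h \<Rightarrow> 'g)
     \<Rightarrow> 'e \<Rightarrow> 'g \<Rightarrow> ('v \<times> ('h \<times> 'g set) set) multiset" where
  "cov_endpoints G Hf vert edge nxt W i g =
     image_mset (\<lambda>h. (vert h, cov_class G Hf vert nxt W h g)) (mset_set {h\<in>Hf. edge h = i})"

definition cov_no_multiple_edges ::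
  "('g, 'x) monoid_scheme \<Rightarrow> 'e set \<Rightarrow> 'h set \<Rightarrow> ('h \<Rightarrow> 'v) \<Rightarrow> ('h \<Rightarrow> 'e) \<Rightarrow> ('h \<Rightarrow> 'h)
     \<Rightarrow> ('h \<Rightarrow> 'g) \<Rightarrow> bool" where
  "cov_no_multiple_edges G E Hf vert edge nxt W \<longleftrightarrow>
     inj_on (\<lambda>(i, g). cov_endpoints G Hf vert edge nxt W i g) (E \<times> carrier G)"

end

theory Submission imports Defs begin

definition ZN :: "nat \<Rightarrow> nat monoid" where
  "ZN N = \<lparr>carrier = {..<N}, monoid.mult = (\<lambda>x y. (x + y) mod N), one = 0\<rparr>"

lemma ZN_simps[simp]: "carrier (ZN N) = {..<N}" "monoid.mult (ZN N) x y = (x+y) mod N" "one (ZN N) = 0"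
  by (simp_all add: ZN_def)

lemma ZN_comm_group: assumes "N > 0" shows "comm_group (ZN N)"
proof (rule comm_groupI)
  fix x assume "x \<in> carrier (ZN N)"
  then show "\<exists>y\<in>carrier (ZN N). y \<otimes>\<^bsub>ZN N\<^esub> x = \<one>\<^bsub>ZN N\<^esub>"
    by (intro bexI[of _ "(N - x) mod N"]) (auto simp: mod_add_left_eq assms)
qed (auto simp: assms mod_add_left_eq mod_add_right_eq ac_simps)

lemma ZN_finprod: assumes "N > 0" "finite S" "\<And>x. x \<in> S \<Longrightarrow> f x < N"
  shows "finprod (ZN N) f S = (\<Sum>x\<in>S. f x) mod N"
  using assms(2,3)
proof (induction S rule: finite_induct)
  case empty
  interpret comm_group "ZN N" using ZN_comm_group[OF assms(1)] .
  show ?case by simp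
next
  case (insert a F)
  interpret comm_group "ZN N" using ZN_comm_group[OF assms(1)] .
  have "finprod (ZN N) f (insert a F) = f a \<otimes>\<^bsub>ZN N\<^esub> finprod (ZN N) f F"
    using insert by (intro finprod_insert) auto
  then show ?case using insert by (simp add: mod_add_right_eq)
qed


lemma arith_final:
  fixes x y A B :: int and n :: nat
  assumes "x = A \<or> x = -A" "y = B \<or> y = -B" "1 \<le> A" "A \<le> int n" "1 \<le> B" "B \<le> int n" "A \<noteq> B"
    "x mod (2 * int n + 1) = y mod (2 * int n + 1)"
  shows False
proof -
  have "(2 * int n + 1) dvd (x - y)" using assms(8) by (simp add: mod_eq_dvd_iff)
  then obtain k where k: "x - y = (2 * int n + 1) * k" by (auto elim: dvdE)
  have "k = 0" proof (rule ccontr)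
    assume "k \<noteq> 0"
    then have "\<bar>(2 * int n + 1) * k\<bar> \<ge> 2 * int n + 1" by (simp add: abs_mult)
    moreover have "\<bar>x - y\<bar> \<le> 2 * int n" using assms(1-6) by auto
    ultimately show False using k by simp
  qed
  then show False using k assms(1-7) by auto
qed

lemma arith_step:
  fixes a b d N :: nat
  assumes "b \<le> N" "d \<le> N"
  shows "((a mod N) + N - b) mod N = (((a + (d + (N - b)) mod N) mod N) mod N + N - d) mod N"
proof -
  have "((a mod N) + N - b) mod N = (a + (N - b)) mod N"
    using assms by (metis Nat.add_diff_assoc mod_add_left_eq)
  moreover have "(((a + (d + (N - b)) mod N) mod N) mod N + N - d) mod N = (a + (N - b)) mod N"
  proof -
    have "(((a + (d + (N - b)) mod N) mod N) mod N + N - d) mod N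
        = (((a + (d + (N - b)) mod N) mod N) mod N + (N - d)) mod N" using assms by simp
    also have "\<dots> = (a + (d + (N - b)) + (N - d)) mod N" by (simp add: mod_simps)
    also have "a + (d + (N - b)) + (N - d) = (a + (N - b)) + N" using assms by simp
    finally show ?thesis by simp
  qed
  ultimately show ?thesis by simp
qed

lemma int_mod_diff: assumes "b \<le> N" shows "int ((g + N - b) mod N) = (int g - int b) mod int N"
proof -
  have "int ((g + N - b) mod N) = int (g + N - b) mod int N" by (simp add: zmod_int)
  also have "int (g + N - b) = (int g - int b) + int N" using assms by simp
  finally show ?thesis by simp
qed

lemma mset2: "{#x1, x2#} = {#y1, y2#} \<Longrightarrow> (x1 = y1 \<and> x2 = y2) \<or> (x1 = y2 \<and> x2 = y1)"
  by (auto simp: add_eq_conv_ex)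


theorem proposition6p6:
  fixes V :: "'v set" and E :: "'e set" and Hf :: "'h set"
    and vert :: "'h \<Rightarrow> 'v" and edge :: "'h \<Rightarrow> 'e" and nxt :: "'h \<Rightarrow> 'h"
    and m :: "'v \<Rightarrow> nat" and q :: "'e \<Rightarrow> 'v \<Rightarrow> 'k::field"
  assumes "quantized_brauer_graph V E Hf vert edge nxt m q"
    and "no_loops Hf vert edge"
  shows "\<exists>(G :: nat monoid) (W :: 'h \<Rightarrow> nat).
           comm_group G \<and> finite (carrier G) \<and>
           brauer_weighting G V Hf vert m W \<and>
           cov_no_multiple_edges G E Hf vert edge nxt W"
proof -
  have bg: "brauer_graph V E Hf vert edge nxt m" using assms(1) by (simp add: quantized_brauer_graph_def)
  have fin: "finite Hf" and card2: "\<And>e. e \<in> E \<Longrightarrow> card {h\<in>Hf. edge h = e} = 2"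
    and bij: "bij_betw nxt Hf Hf" and vn: "\<And>h. h \<in> Hf \<Longrightarrow> vert (nxt h) = vert h"
    using bg by (auto simp: brauer_graph_def)
  have nl: "\<And>h h'. h \<in> Hf \<Longrightarrow> h' \<in> Hf \<Longrightarrow> edge h = edge h' \<Longrightarrow> h \<noteq> h' \<Longrightarrow> vert h \<noteq> vert h'"
    using assms(2) by (auto simp: no_loops_def)
  define n where "n = card Hf"
  obtain f where f: "bij_betw f Hf {0..<n}" using ex_bij_betw_finite_nat[OF fin] n_def by blast
  have finj: "inj_on f Hf" and flt: "\<And>h. h \<in> Hf \<Longrightarrow> f h < n"
    using f by (auto simp: bij_betw_def)
  define N where "N = 2 * n + 1"
  define p where "p h = (if \<forall>h'\<in>Hf. edge h' = edge h \<longrightarrow> f h \<le> f h' then f h + 1 else 0)" for h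
  define W where "W h = (p (nxt h) + (N - p h)) mod N" for h
  define G where "G = ZN N"
  have Npos: "N > 0" by (simp add: N_def)
  interpret cg: comm_group G unfolding G_def using ZN_comm_group[OF Npos] .
  have pn: "\<And>h. h \<in> Hf \<Longrightarrow> p h \<le> n" using flt by (simp add: p_def Suc_leI)
  have pN: "\<And>h. h \<in> Hf \<Longrightarrow> p h \<le> N" using pn by (fastforce simp add: N_def)
  have nxtHf: "\<And>h. h \<in> Hf \<Longrightarrow> nxt h \<in> Hf" using bij bij_betwE by blast
  have WN: "\<And>h. W h < N" using Npos by (simp add: W_def)
  have omega0: "omega G Hf vert W \<mu> = 0" for \<mu>
  proof -
    define S where "S = {h\<in>Hf. vert h = \<mu>}"
    have finS: "finite S" using fin by (simp add: S_def)
    have bS: "bij_betw nxt S S"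
    proof -
      have "inj_on nxt S" using bij by (auto simp: bij_betw_def S_def intro: inj_on_subset)
      moreover have "nxt ` S = S"
      proof
        show "nxt ` S \<subseteq> S" using nxtHf vn by (auto simp: S_def)
        show "S \<subseteq> nxt ` S"
        proof
          fix x assume "x \<in> S"
          then obtain y where "y \<in> Hf" "x = nxt y" using bij by (auto simp: bij_betw_def S_def)
          then show "x \<in> nxt ` S" using \<open>x \<in> S\<close> vn by (auto simp: S_def)
        qed
      qed
      ultimately show ?thesis by (simp add: bij_betw_def)
    qed
    have "omega G Hf vert W \<mu> = (\<Sum>h\<in>S. W h) mod N"
      unfolding omega_def G_def S_def[symmetric] using ZN_finprod[OF Npos finS] WN by blast
    also have "\<dots> = (\<Sum>h\<in>S. p (nxt h) + (N - p h)) mod N"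
      unfolding W_def by (simp add: mod_sum_eq)
    also have "(\<Sum>h\<in>S. p (nxt h) + (N - p h)) = (\<Sum>h\<in>S. p (nxt h)) + (\<Sum>h\<in>S. N - p h)"
      by (simp add: sum.distrib)
    also have "(\<Sum>h\<in>S. p (nxt h)) = (\<Sum>h\<in>S. p h)"
      using sum.reindex_bij_betw[OF bS, of p] by simp
    also have "(\<Sum>h\<in>S. p h) + (\<Sum>h\<in>S. N - p h) = (\<Sum>h\<in>S. p h + (N - p h))"
      by (simp add: sum.distrib)
    also have "\<dots> = (\<Sum>h\<in>S. N)" using pN by (intro sum.cong) (auto simp: S_def)
    finally show ?thesis by simp
  qed
  have Hs: "Hsub G Hf vert W \<mu> = {0}" for \<mu>
    unfolding Hsub_def omega0 using cg.generate_one by (simp add: G_def)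
  have rc: "r_coset G {0} g = {g mod N}" for g
    by (simp add: r_coset_def G_def)
  have bw: "brauer_weighting G V Hf vert m W"
    unfolding brauer_weighting_def successor_weighting_def omega0 using WN cg.ord_id by (simp add: G_def)
  define \<phi> where "\<phi> x = (\<lambda>y. (y + N - p (fst x)) mod N) ` (snd x)" for x :: "'h \<times> nat set"
  have stepinv: "\<phi> x = \<phi> y" if "(x, y) \<in> cov_step G Hf vert nxt W \<mu>" for \<mu> x y
  proof -
    from that obtain h0 g0 where h0: "h0 \<in> Hf" and
      xy0: "x = (h0, r_coset G (Hsub G Hf vert W \<mu>) g0)"
        "y = (nxt h0, r_coset G (Hsub G Hf vert W \<mu>) (g0 \<otimes>\<^bsub>G\<^esub> W h0))"
      by (auto simp: cov_step_def)
    have xy: "x = (h0, {g0 mod N})" "y = (nxt h0, {((g0 + W h0) mod N) mod N})"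
      using xy0 unfolding Hs rc by (simp_all add: G_def)
    show ?thesis using arith_step[OF pN[OF h0] pN[OF nxtHf[OF h0]], of g0]
      by (simp add: \<phi>_def xy W_def)
  qed
  have clsinv: "\<phi> x = \<phi> y" if "(x, y) \<in> (R \<union> R\<inverse>)\<^sup>*" "R = cov_step G Hf vert nxt W \<mu>" for R \<mu> x y
    using that(1)
  proof (induction rule: rtrancl_induct)
    case base then show ?case by simp
  next
    case (step y z)
    have "\<phi> y = \<phi> z" using step.hyps(2) stepinv[of y z \<mu>] stepinv[of z y \<mu>] that(2) by blast
    with step.IH show ?case by simp
  qed
  have cls: "(int g - int (p h)) mod int N = (int g' - int (p h')) mod int N"
    if "h \<in> Hf" "h' \<in> Hf" "vert h = vert h'" "g < N" "g' < N"
       "cov_class G Hf vert nxt W h g = cov_class G Hf vert nxt W h' g'" for h h' g g'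
  proof -
    let ?R = "cov_step G Hf vert nxt W (vert h)"
    have "(h', r_coset G (Hsub G Hf vert W (vert h')) g') \<in> cov_class G Hf vert nxt W h' g'"
      by (simp add: cov_class_def Let_def)
    then have "((h, r_coset G (Hsub G Hf vert W (vert h)) g), (h', r_coset G (Hsub G Hf vert W (vert h')) g'))
      \<in> (?R \<union> ?R\<inverse>)\<^sup>*" using that(3,6) unfolding cov_class_def Let_def
      by (metis Image_singleton_iff)
    then have "\<phi> (h, {g}) = \<phi> (h', {g'})" using clsinv[OF _ refl] by (simp add: Hs rc that(4,5))
    then have "(g + N - p h) mod N = (g' + N - p h') mod N" by (simp add: \<phi>_def)
    then show ?thesis using int_mod_diff[OF pN[OF that(1)]] int_mod_diff[OF pN[OF that(2)]] by metis
  qed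
  have halves: "\<exists>h1 h2. {h\<in>Hf. edge h = i} = {h1, h2} \<and> h1 \<noteq> h2" if "i \<in> E" for i
    using card2[OF that] by (simp add: card_2_iff)
  have endp: "cov_endpoints G Hf vert edge nxt W i g =
      {#(vert h1, cov_class G Hf vert nxt W h1 g), (vert h2, cov_class G Hf vert nxt W h2 g)#}"
    if "{h\<in>Hf. edge h = i} = {h1, h2}" "h1 \<noteq> h2" for i g h1 h2
    using that by (simp add: cov_endpoints_def)
  have diff: "int (p h1) - int (p h2) = (if f h1 < f h2 then int (f h1) + 1 else - (int (f h2) + 1))"
    if "{h\<in>Hf. edge h = i} = {h1, h2}" "h1 \<noteq> h2" for i h1 h2
  proof -
    have h12: "h1 \<in> Hf" "h2 \<in> Hf" "edge h1 = i" "edge h2 = i" using that(1) by blast+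
    have "f h1 \<noteq> f h2" using finj h12 that(2) by (meson inj_on_eq_iff)
    moreover have "\<And>h'. h' \<in> Hf \<Longrightarrow> edge h' = i \<Longrightarrow> h' = h1 \<or> h' = h2" using that(1) by blast
    ultimately have "p h1 = (if f h1 < f h2 then f h1 + 1 else 0)" "p h2 = (if f h2 < f h1 then f h2 + 1 else 0)"
    proof -
      have c: "(\<forall>h'\<in>Hf. edge h' = edge x \<longrightarrow> f x \<le> f h') \<longleftrightarrow> f x < f y"
        if "{x, y} = {h1, h2}" for x y
      proof
        assume "\<forall>h'\<in>Hf. edge h' = edge x \<longrightarrow> f x \<le> f h'"
        then show "f x < f y" using that h12 \<open>f h1 \<noteq> f h2\<close> by (auto simp: doubleton_eq_iff)
      next
        assume "f x < f y"
        then show "\<forall>h'\<in>Hf. edge h' = edge x \<longrightarrow> f x \<le> f h'"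
          using that h12 \<open>\<And>h'. h' \<in> Hf \<Longrightarrow> edge h' = i \<Longrightarrow> h' = h1 \<or> h' = h2\<close>
          by (auto simp: doubleton_eq_iff) (metis less_imp_le order_refl)+
      qed
      show "p h1 = (if f h1 < f h2 then f h1 + 1 else 0)" using c[of h1 h2] by (simp add: p_def)
      show "p h2 = (if f h2 < f h1 then f h2 + 1 else 0)" using c[of h2 h1] by (simp add: p_def insert_commute)
    qed
    then show ?thesis using \<open>f h1 \<noteq> f h2\<close> by auto
  qed
  have nme: "cov_no_multiple_edges G E Hf vert edge nxt W"
    unfolding cov_no_multiple_edges_def
  proof (rule inj_onI)
    fix x y assume x: "x \<in> E \<times> carrier G" and y: "y \<in> E \<times> carrier G"
      and eq: "(\<lambda>(i, g). cov_endpoints G Hf vert edge nxt W i g) x = (\<lambda>(i, g). cov_endpoints G Hf vert edge nxt W i g) y"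
    obtain i g i' g' where xy: "x = (i, g)" "y = (i', g')" by fastforce
    have iE: "i \<in> E" "i' \<in> E" and gN: "g < N" "g' < N" using x y xy by (auto simp: G_def)
    obtain h1 h2 where H: "{h\<in>Hf. edge h = i} = {h1, h2}" "h1 \<noteq> h2" using halves[OF iE(1)] by blast
    obtain k1 k2 where K: "{h\<in>Hf. edge h = i'} = {k1, k2}" "k1 \<noteq> k2" using halves[OF iE(2)] by blast
    have h12: "h1 \<in> Hf" "h2 \<in> Hf" "edge h1 = i" "edge h2 = i" using H(1) by blast+
    have k12: "k1 \<in> Hf" "k2 \<in> Hf" "edge k1 = i'" "edge k2 = i'" using K(1) by blast+
    have vh: "vert h1 \<noteq> vert h2" using nl h12 H(2) by metis
    let ?C = "cov_class G Hf vert nxt W"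
    have meq: "{#(vert h1, ?C h1 g), (vert h2, ?C h2 g)#} = {#(vert k1, ?C k1 g'), (vert k2, ?C k2 g')#}"
      using eq endp[OF H] endp[OF K] xy by simp
    obtain a b where ab: "{a, b} = {k1, k2}" "a \<noteq> b" "vert a = vert h1" "?C a g' = ?C h1 g"
      "vert b = vert h2" "?C b g' = ?C h2 g"
    proof -
      from mset2[OF meq] show thesis
      proof
        assume "(vert h1, ?C h1 g) = (vert k1, ?C k1 g') \<and> (vert h2, ?C h2 g) = (vert k2, ?C k2 g')"
        then show thesis using that[of k1 k2] K(2) by auto
      next
        assume "(vert h1, ?C h1 g) = (vert k2, ?C k2 g') \<and> (vert h2, ?C h2 g) = (vert k1, ?C k1 g')"
        then show thesis using that[of k2 k1] K(2) by (auto simp: insert_commute)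
      qed
    qed
    have abHf: "a \<in> Hf" "b \<in> Hf" using ab(1) k12 by auto
    have Kab: "{h\<in>Hf. edge h = i'} = {a, b}" using K(1) ab(1) by simp
    have e1: "(int g - int (p h1)) mod int N = (int g' - int (p a)) mod int N"
      using cls[OF h12(1) abHf(1) ab(3)[symmetric] gN ab(4)[symmetric]] .
    have e2: "(int g - int (p h2)) mod int N = (int g' - int (p b)) mod int N"
      using cls[OF h12(2) abHf(2) ab(5)[symmetric] gN ab(6)[symmetric]] .
    show "x = y"
    proof (cases "i = i'")
      case True
      then have "a \<in> {h1, h2}" using Kab H(1) by auto
      then have "a = h1" using ab(3) vh by auto
      then have "int g mod int N = int g' mod int N" using e1
        by (metis mod_diff_eq diff_add_cancel mod_add_left_eq)
      then have "g = g'" using gN by simp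
      then show ?thesis using True xy by simp
    next
      case False
      have d: "(int (p h1) - int (p h2)) mod int N = (int (p a) - int (p b)) mod int N"
      proof -
        have "(int (p h1) - int (p h2)) = (int g - int (p h2)) - (int g - int (p h1))" by simp
        then have "(int (p h1) - int (p h2)) mod int N = ((int g - int (p h2)) mod int N - (int g - int (p h1)) mod int N) mod int N"
          by (simp add: mod_diff_eq)
        also have "\<dots> = ((int g' - int (p b)) mod int N - (int g' - int (p a)) mod int N) mod int N"
          using e1 e2 by simp
        also have "\<dots> = (int (p a) - int (p b)) mod int N" by (simp add: mod_diff_eq)
        finally show ?thesis .
      qed
      define r1 where "r1 = (if f h1 < f h2 then h1 else h2)"
      define r2 where "r2 = (if f a < f b then a else b)"
      have "edge r1 = i" "edge r2 = i'" "r1 \<in> Hf" "r2 \<in> Hf"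
        using h12 abHf Kab by (auto simp: r1_def r2_def)
      then have "r1 \<noteq> r2" using False by auto
      then have "f r1 \<noteq> f r2" using finj \<open>r1 \<in> Hf\<close> \<open>r2 \<in> Hf\<close> by (meson inj_on_eq_iff)
      have fr: "f r1 < n" "f r2 < n" using flt \<open>r1 \<in> Hf\<close> \<open>r2 \<in> Hf\<close> by auto
      show ?thesis
      proof (rule FalseE, rule arith_final[of "int (p h1) - int (p h2)" "int (f r1) + 1" "int (p a) - int (p b)" "int (f r2) + 1" n])
        show "int (p h1) - int (p h2) = int (f r1) + 1 \<or> int (p h1) - int (p h2) = - (int (f r1) + 1)"
          using diff[OF H] by (simp add: r1_def)
        show "int (p a) - int (p b) = int (f r2) + 1 \<or> int (p a) - int (p b) = - (int (f r2) + 1)"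
          using diff[OF Kab ab(2)] by (simp add: r2_def)
        show "(int (p h1) - int (p h2)) mod (2 * int n + 1) = (int (p a) - int (p b)) mod (2 * int n + 1)"
          using d by (simp add: N_def add.commute)
      qed (use fr \<open>f r1 \<noteq> f r2\<close> in auto)
    qed
  qed
  show ?thesis
    by (rule exI[of _ G], rule exI[of _ W]) (use bw nme cg.comm_group_axioms in \<open>auto simp: G_def\<close>)
qed

end
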